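(* Let $A$ be an $n\times n$ Hermitian matrix. For all integers $1\le k\le m\le n$, $$\underbrace{X_m(A)\cup\dots\cup X_m(A)}_{\binom{m-1}{k-1}\text{ times}}\;\succ\;\underbrace{X_k(A)\cup\dots\cup X_k(A)}_{\binom{n-k}{m-k}\text{ times}}.$$
   Context: For $1\le m\le n$, $X_m(A)$ is the real vector (of length $m\binom nm$) listing the eigenvalues, with multiplicity, of all $\binom nm$ principal $m\times m$ submatrices of $A$. The symbol $\cup$ denotes concatenation of vectors. For $x\in\mathbb R^N$, $x^{\downarrow}$ is the non-increasing rearrangement of $x$; for $x,y\in\mathbb R^N$, $x\succ y$ means $\sum_{i=1}^k x^{\downarrow}_i\ge\sum_{i=1}^k y^{\downarrow}_i$ for all $k=1,\dots,N$ with equality for $k=N$ (majorization is invariant under reordering the entries). *)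

theory Defs
  imports "Jordan_Normal_Form.Char_Poly" "Jordan_Normal_Form.DL_Submatrix"
begin

definition hermitian_mat :: "complex mat \<Rightarrow> nat \<Rightarrow> bool" where
  "hermitian_mat A n \<longleftrightarrow> A \<in> carrier_mat n n \<and>
     (\<forall>i<n. \<forall>j<n. A $$ (i, j) = cnj (A $$ (j, i)))"

definition eigenvalues_mset :: "complex mat \<Rightarrow> complex multiset" where
  "eigenvalues_mset B = proots (char_poly B)"

text \<open>X_m(A): eigenvalues (with multiplicity, real parts; they are real for Hermitian A)
  of all principal m x m submatrices of A, collected as a multiset (the order of
  the entries is irrelevant for majorization).\<close>
definition X :: "nat \<Rightarrow> complex mat \<Rightarrow> real multiset" where
  "X m A = (\<Sum>I \<in> {I. I \<subseteq> {..<dim_row A} \<and> card I = m}.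
              image_mset Re (eigenvalues_mset (submatrix A I I)))"

definition desc :: "real multiset \<Rightarrow> real list" where
  "desc x = rev (sorted_list_of_multiset x)"

definition majorizes :: "real multiset \<Rightarrow> real multiset \<Rightarrow> bool" where
  "majorizes x y \<longleftrightarrow> size x = size y \<and>
     (\<forall>k\<in>{1..size x}. sum_list (take k (desc y)) \<le> sum_list (take k (desc x))) \<and>
     sum_list (take (size x) (desc x)) = sum_list (take (size x) (desc y))"

end

theory Submission
  imports Defs "Jordan_Normal_Form.Schur_Decomposition"
begin


definition adj :: "complex mat \<Rightarrow> complex mat" where
  "adj U = mat (dim_col U) (dim_row U) (\<lambda>(i,j). cnj (U $$ (j,i)))"

lemma adj_dim[simp]: "dim_row (adj U) = dim_col U" "dim_col (adj U) = dim_row U"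
  unfolding adj_def by auto

lemma adj_index[simp]: "i < dim_col U \<Longrightarrow> j < dim_row U \<Longrightarrow> adj U $$ (i,j) = cnj (U $$ (j,i))"
  unfolding adj_def by auto

lemma adj_carrier[simp]: "U \<in> carrier_mat n m \<Longrightarrow> adj U \<in> carrier_mat m n"
  unfolding carrier_mat_def by auto

lemma adj_adj[simp]: "adj (adj U) = U"
  by (rule eq_matI) auto

lemma adj_mult: assumes "A \<in> carrier_mat n k" "B \<in> carrier_mat k m"
  shows "adj (A * B) = adj B * adj A"
  by (rule eq_matI, insert assms, auto simp: scalar_prod_def intro!: sum.cong)

lemma adj_one[simp]: "adj (1\<^sub>m n) = 1\<^sub>m n"
  by (rule eq_matI) auto

definition unitary :: "complex mat \<Rightarrow> nat \<Rightarrow> bool" where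
  "unitary U n \<longleftrightarrow> U \<in> carrier_mat n n \<and> adj U * U = 1\<^sub>m n"

lemma unitary_right: "unitary U n \<Longrightarrow> U * adj U = 1\<^sub>m n"
  unfolding unitary_def using mat_mult_left_right_inverse[of "adj U" n U] by auto

lemma unitary_conj: assumes u: "unitary W n" and A: "A \<in> carrier_mat n n"
  shows "W * (adj W * A * W) * adj W = A"
proof -
  have W: "W \<in> carrier_mat n n" and aW: "adj W \<in> carrier_mat n n" using u unfolding unitary_def by auto
  have WW: "W * adj W = 1\<^sub>m n" using unitary_right[OF u] .
  have "W * (adj W * A * W) = W * (adj W * A) * W"
    by (rule assoc_mult_mat[symmetric, of _ n n _ n _ n]) (use W aW A in auto)
  also have "W * (adj W * A) = (W * adj W) * A"
    by (rule assoc_mult_mat[symmetric, of _ n n _ n _ n]) (use W aW A in auto)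
  also have "\<dots> = A" using WW A by simp
  finally have "W * (adj W * A * W) * adj W = A * W * adj W" by simp
  also have "\<dots> = A * (W * adj W)"
    by (rule assoc_mult_mat[of _ n n _ n _ n]) (use W aW A in auto)
  finally show ?thesis using WW A by simp
qed

lemma unitary_mult: assumes "unitary U n" "unitary V n" shows "unitary (U * V) n"
proof -
  have U: "U \<in> carrier_mat n n" and V: "V \<in> carrier_mat n n" using assms unfolding unitary_def by auto
  have e1: "adj (U * V) * (U * V) = adj V * (adj U * (U * V))" using U V by (simp add: adj_mult assoc_mult_mat[of _ n n _ n _ n])
  have "adj U * (U * V) = (adj U * U) * V" using U V by (metis adj_carrier assoc_mult_mat)
  also have "\<dots> = V" using assms V unfolding unitary_def by simp
  finally have "adj (U * V) * (U * V) = 1\<^sub>m n" using e1 assms unfolding unitary_def by simp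
  then show ?thesis using U V unfolding unitary_def by auto
qed

definition cnorm :: "complex vec \<Rightarrow> complex" where
  "cnorm u = complex_of_real (sqrt (Re (u \<bullet>c u)))"

definition nz :: "complex vec \<Rightarrow> complex vec" where
  "nz u = (1 / cnorm u) \<cdot>\<^sub>v u"

lemma cscalar_smult: assumes "u \<in> carrier_vec n" "w \<in> carrier_vec n"
  shows "(a \<cdot>\<^sub>v u) \<bullet>c (b \<cdot>\<^sub>v w) = a * cnj b * (u \<bullet>c w)"
  using assms unfolding scalar_prod_def by (auto simp: sum_distrib_left intro!: sum.cong)

lemma cself_real: fixes u :: "complex vec"
  shows "u \<bullet>c u = complex_of_real (Re (u \<bullet>c u)) \<and> Re (u \<bullet>c u) \<ge> 0"
proof -
  have "0 \<le> u \<bullet>c u" by (rule conjugate_square_ge_0_vec)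
  thus ?thesis by (auto simp: less_eq_complex_def complex_eq_iff)
qed

lemma cnorm_nz: assumes "u \<in> carrier_vec n" "u \<noteq> 0\<^sub>v n" shows "cnorm u \<noteq> 0"
proof -
  have "u \<bullet>c u \<noteq> 0" using assms by simp
  hence "Re (u \<bullet>c u) \<noteq> 0" using cself_real[of u] by (metis of_real_0)
  hence "Re (u \<bullet>c u) > 0" using cself_real[of u] by auto
  thus ?thesis unfolding cnorm_def by simp
qed

lemma nz_carrier[simp]: "u \<in> carrier_vec n \<Longrightarrow> nz u \<in> carrier_vec n"
  unfolding nz_def by simp

lemma nz_cscalar: assumes "u \<in> carrier_vec n" "w \<in> carrier_vec n"
  shows "nz u \<bullet>c nz w = (1 / cnorm u) * (1 / cnorm w) * (u \<bullet>c w)"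
  unfolding nz_def cscalar_smult[OF assms] by (simp add: cnorm_def)

lemma nz_self: assumes "u \<in> carrier_vec n" "u \<noteq> 0\<^sub>v n"
  shows "nz u \<bullet>c nz u = 1"
proof -
  have r: "u \<bullet>c u = complex_of_real (Re (u \<bullet>c u))" "Re (u \<bullet>c u) \<ge> 0" using cself_real[of u] by auto
  have "cnorm u * cnorm u = u \<bullet>c u" unfolding cnorm_def
    by (subst r(1), simp only: of_real_mult[symmetric] real_sqrt_mult_self r(2) abs_of_nonneg)
  moreover have "u \<bullet>c u \<noteq> 0" using assms by simp
  ultimately show ?thesis unfolding nz_cscalar[OF assms(1) assms(1)] using cnorm_nz[OF assms]
    by (simp add: field_simps)
qed

lemma unitary_schur:
  fixes A :: "complex mat"
  assumes "A \<in> carrier_mat n n"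
  shows "\<exists>B P. unitary P n \<and> B \<in> carrier_mat n n \<and> upper_triangular B \<and> A = P * B * adj P"
  using assms
proof (induct n arbitrary: A)
  case 0
  show ?case
    by (rule exI[of _ A], rule exI[of _ "1\<^sub>m 0"], insert 0, auto simp: unitary_def upper_triangular_def)
next
  case (Suc n1 A)
  define n where "n = Suc n1"
  have A: "A \<in> carrier_mat n n" using Suc(2) unfolding n_def .
  have n: "n \<noteq> 0" unfolding n_def by simp
  from char_poly_factorized[OF A] obtain as where cA: "char_poly A = (\<Prod> a \<leftarrow> as. [:- a, 1:])"
    and las: "length as = n" by auto
  from las n obtain e es where as: "as = e # es" by (cases as, auto)
  have "poly (char_poly A) e = 0" unfolding cA as by (simp add: poly_prod_list)
  hence ev: "eigenvalue A e" using eigenvalue_root_char_poly[OF A] by simp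
  define v where "v = find_eigenvector A e"
  from find_eigenvector[OF A ev] have "eigenvector A v e" unfolding v_def .
  hence v: "v \<in> carrier_vec n" and v0: "v \<noteq> 0\<^sub>v n" and eig: "A *\<^sub>v v = e \<cdot>\<^sub>v v"
    using A unfolding eigenvector_def by auto
  interpret cof_vec_space n "TYPE(complex)" .
  define b where "b = basis_completion v"
  define ws where "ws = gram_schmidt n b"
  from basis_completion[OF v v0, folded b_def]
  have span_b: "span (set b) = carrier_vec n" and dist_b: "distinct b"
    and indep: "\<not> lin_dep (set b)" and b: "set b \<subseteq> carrier_vec n" and hdb: "hd b = v"
    and len_b: "length b = n" by auto
  from hdb len_b n obtain vs where bv: "b = v # vs" by (cases b, auto)
  from gram_schmidt_result[OF b dist_b indep refl, folded ws_def]
  have ws: "set ws \<subseteq> carrier_vec n" "corthogonal ws" "length ws = n"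
    by (auto simp: len_b)
  from gram_schmidt_hd[OF v, of vs, folded bv] have hdws: "hd ws = v" unfolding ws_def .
  have wsi: "i < n \<Longrightarrow> ws ! i \<in> carrier_vec n" for i using ws by auto
  have ws0: "i < n \<Longrightarrow> ws ! i \<noteq> 0\<^sub>v n" for i
  proof
    assume i: "i < n" and "ws ! i = 0\<^sub>v n"
    hence "ws ! i \<bullet>c ws ! i = 0" by simp
    with corthogonalD[OF ws(2), of i i] i ws(3) show False by auto
  qed
  define ws' where "ws' = map nz ws"
  have ws'i: "i < n \<Longrightarrow> ws' ! i = nz (ws ! i)" for i unfolding ws'_def using ws(3) by auto
  have ws': "set ws' \<subseteq> carrier_vec n" "length ws' = n" using ws unfolding ws'_def by auto
  have cn0: "i < n \<Longrightarrow> cnorm (ws ! i) \<noteq> 0" for i using cnorm_nz[OF wsi ws0] .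
  have orth': "corthogonal ws'"
  proof (rule corthogonalI)
    fix i j assume "i < length ws'" "j < length ws'"
    hence i: "i < n" and j: "j < n" using ws' by auto
    show "(ws' ! i \<bullet>c ws' ! j = 0) = (i \<noteq> j)"
      unfolding ws'i[OF i] ws'i[OF j] nz_cscalar[OF wsi[OF i] wsi[OF j]]
      using corthogonalD[OF ws(2), of i j] i j ws(3) cn0[OF i] cn0[OF j] by simp
  qed
  have unit': "i < n \<Longrightarrow> ws' ! i \<bullet>c ws' ! i = 1" for i
    using ws'i nz_self[OF wsi ws0] by simp
  define v' where "v' = nz v"
  have hdws': "hd ws' = v'" unfolding ws'_def v'_def using hdws ws(3) n by (cases ws, auto)
  have v': "v' \<in> carrier_vec n" unfolding v'_def using v by simp
  have v'0: "v' \<noteq> 0\<^sub>v n" using nz_self[OF v v0] v' unfolding v'_def by auto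
  have eig': "A *\<^sub>v v' = e \<cdot>\<^sub>v v'" unfolding v'_def nz_def
    by (simp add: mult_mat_vec[OF A v] eig smult_smult_assoc mult.commute)
  define W where "W = mat_of_cols n ws'"
  have W: "W \<in> carrier_mat n n" unfolding W_def using ws' by auto
  have cinv: "corthogonal_inv W = adj W"
  proof (rule eq_matI)
    show "dim_row (corthogonal_inv W) = dim_row (adj W)" "dim_col (corthogonal_inv W) = dim_col (adj W)"
      using W unfolding corthogonal_inv_def by auto
    fix i j assume "i < dim_row (adj W)" "j < dim_col (adj W)"
    hence i: "i < n" and j: "j < n" using W by auto
    have ci: "col W i = ws' ! i" unfolding W_def using i ws' by (intro col_mat_of_cols, auto)
    have Wji: "W $$ (j,i) = ws' ! i $ j" using arg_cong[OF ci, of "\<lambda>x. x $ j"] i j W by auto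
    have wsc: "ws' ! i \<in> carrier_vec n" using ws' i by (metis nth_mem subsetD)
    hence dv: "dim_vec (ws' ! i) = n" by (rule carrier_vecD)
    have "corthogonal_inv W $$ (i, j) = vec_inv (col W i) $ j"
      unfolding corthogonal_inv_def using i j W by (simp add: mat_of_rows_index)
    also have "\<dots> = cnj (ws' ! i $ j)" unfolding ci vec_inv_def unit'[OF i] using dv j by simp
    also have "\<dots> = adj W $$ (i, j)" using Wji i j W by simp
    finally show "corthogonal_inv W $$ (i, j) = adj W $$ (i, j)" .
  qed
  have orth_W: "corthogonal_mat W" using orthogonal_mat_of_cols[OF ws'(1) orth' ws'(2)] unfolding W_def .
  from corthogonal_inv_result[OF orth_W] have "inverts_mat (adj W) W" unfolding cinv .
  hence WW: "adj W * W = 1\<^sub>m n" using W unfolding inverts_mat_def by auto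
  have uW: "unitary W n" using W WW unfolding unitary_def by auto
  have WW2: "W * adj W = 1\<^sub>m n" using unitary_right[OF uW] .
  define A' where "A' = adj W * A * W"
  have col0: "col A' 0 = vec n (\<lambda> i. if i = 0 then e else 0)"
    using corthogonal_col_ev_0[OF A v' v'0 eig' n hdws' ws'(1) orth' ws'(2)]
    unfolding A'_def W_def[symmetric] cinv .
  have A': "A' \<in> carrier_mat n n" using W A unfolding A'_def by auto
  have simAA': "similar_mat_wit A A' W (adj W)"
  proof (rule similar_mat_witI[of _ _ n])
    show "A = W * A' * adj W" unfolding A'_def using unitary_conj[OF uW A] by simp
  qed (insert W A A' WW WW2, auto)
  obtain A1 A2 A0 A3 where splitA': "split_block A' 1 1 = (A1,A2,A0,A3)"
    by (cases "split_block A' 1 1", auto)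
  from A' n have "dim_row A' = 1 + n1" "dim_col A' = 1 + n1" unfolding n_def by auto
  from split_block[OF splitA' this] have A2: "A2 \<in> carrier_mat 1 n1"
    and A3: "A3 \<in> carrier_mat n1 n1"
    and A'block: "A' = four_block_mat A1 A2 A0 A3" by auto
  have A1id: "A1 = mat 1 1 (\<lambda> _. e)"
    using splitA'[unfolded split_block_def Let_def] arg_cong[OF col0, of "\<lambda> v. v $ 0"] A' n
    by (auto simp: col_def)
  have A1: "A1 \<in> carrier_mat 1 1" unfolding A1id by auto
  {
    fix i
    assume "i < n1"
    with arg_cong[OF col0, of "\<lambda> v. v $ Suc i"] A'
    have "A' $$ (Suc i, 0) = 0" unfolding n_def by auto
  } note A'0 = this
  have A0id: "A0 = 0\<^sub>m n1 1"
    using splitA'[unfolded split_block_def Let_def] A'0 A' by (auto simp: n_def)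
  have A0: "A0 \<in> carrier_mat n1 1" unfolding A0id by auto
  from Suc(1)[OF A3] obtain B P' where uP': "unitary P' n1" and B: "B \<in> carrier_mat n1 n1"
    and ut: "upper_triangular B" and A3B: "A3 = P' * B * adj P'" by auto
  have P': "P' \<in> carrier_mat n1 n1" using uP' unfolding unitary_def by auto
  have PQ': "P' * adj P' = 1\<^sub>m n1" "adj P' * P' = 1\<^sub>m n1" using uP' unitary_right[OF uP'] unfolding unitary_def by auto
  have simIH: "similar_mat_wit A3 B P' (adj P')"
    by (rule similar_mat_witI[of _ _ n1], insert PQ' A3B A3 B P', auto)
  let ?P' = "four_block_mat (1\<^sub>m 1) (0\<^sub>m 1 n1) (0\<^sub>m n1 1) P'"
  let ?Q' = "four_block_mat (1\<^sub>m 1) (0\<^sub>m 1 n1) (0\<^sub>m n1 1) (adj P')"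
  define C where "C = four_block_mat A1 (A2 * P') A0 B"
  have A0_eq: "A0 = P' * A0 * 1\<^sub>m 1" unfolding A0id using P' by auto
  have A2P: "A2 * P' * adj P' = A2" using assoc_mult_mat[of A2 1 n1 P' n1 "adj P'" n1] A2 P' PQ' by simp
  have simA'C: "similar_mat_wit A' C ?P' ?Q'" unfolding A'block C_def
    by (rule similar_mat_wit_four_block[OF similar_mat_wit_refl[OF A1] simIH _ A0_eq A1 A3 A0],
    insert PQ' A2 P' A2P, auto)
  have ut1: "upper_triangular A1" unfolding A1id by auto
  have utC: "upper_triangular C" unfolding C_def A0id
    by (intro upper_triangular_four_block[OF _ B ut1 ut], auto simp: A1id)
  have Qadj: "?Q' = adj ?P'"
  proof (rule eq_matI)
    fix i j assume "i < dim_row (adj ?P')" "j < dim_col (adj ?P')"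
    hence i: "i < 1 + n1" and j: "j < 1 + n1" using P' by auto
    show "?Q' $$ (i, j) = adj ?P' $$ (i, j)"
      using i j P' by (cases "i = 0"; cases "j = 0"; simp)
  qed (insert P', auto)
  from similar_mat_wit_trans[OF simAA' simA'C]
  have sim: "similar_mat_wit A C (W * ?P') (?Q' * adj W)" .
  from similar_mat_witD2[OF A sim] have C: "C \<in> carrier_mat n n" and AC: "A = W * ?P' * C * (?Q' * adj W)"
    by auto
  from similar_mat_witD2[OF A' simA'C] have P'': "?P' \<in> carrier_mat n n" and QP: "?Q' * ?P' = 1\<^sub>m n"
    by auto
  have uP'': "unitary ?P' n" using P'' QP unfolding unitary_def Qadj by auto
  have adjP: "?Q' * adj W = adj (W * ?P')" unfolding Qadj using adj_mult[OF W P''] by simp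
  show ?case
    by (rule exI[of _ C], rule exI[of _ "W * ?P'"], insert unitary_mult[OF uW uP''] C utC AC adjP,
      auto simp: n_def)
qed

lemma proots_linear_prod: "proots (\<Prod>a\<leftarrow>as. [:- a, 1:]) = mset (as :: complex list)"
proof (induct as)
  case (Cons a as)
  have "proots (\<Prod>a\<leftarrow>a # as. [:- a, 1:]) = proots ([:- a, 1:] * (\<Prod>a\<leftarrow>as. [:- a, 1:]))" by simp
  also have "\<dots> = proots [:- a, 1:] + proots (\<Prod>a\<leftarrow>as. [:- a, 1:])"
    by (rule proots_mult, auto simp: prod_list_zero_iff)
  finally show ?case using Cons proots_linear_factor[of "- a"] by simp
qed simp

lemma hermitian_frame:
  fixes B :: "complex mat"
  assumes B: "B \<in> carrier_mat m m" and herm: "\<forall>i<m. \<forall>j<m. B $$ (i,j) = cnj (B $$ (j,i))"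
  shows "\<exists>U (lam :: nat \<Rightarrow> real). unitary U m \<and>
     (\<forall>i<m. \<forall>j<m. B $$ (i,j) = (\<Sum>l<m. U $$ (i,l) * complex_of_real (lam l) * cnj (U $$ (j,l)))) \<and>
     image_mset Re (eigenvalues_mset B) = mset (map lam [0..<m])"
proof -
  from unitary_schur[OF B] obtain T P where uP: "unitary P m" and T: "T \<in> carrier_mat m m"
    and ut: "upper_triangular T" and BT: "B = P * T * adj P" by auto
  have P: "P \<in> carrier_mat m m" and aP: "adj P \<in> carrier_mat m m" using uP unfolding unitary_def by auto
  have PP: "adj P * P = 1\<^sub>m m" using uP unfolding unitary_def by auto
  have adjB: "adj B = B"
  proof (rule eq_matI)
    fix i j assume "i < dim_row B" "j < dim_col B"
    hence i: "i < m" and j: "j < m" using B by auto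
    have "adj B $$ (i,j) = cnj (B $$ (j,i))" using i j B by simp
    also have "\<dots> = B $$ (i,j)" using herm i j by metis
    finally show "adj B $$ (i,j) = B $$ (i,j)" .
  qed (insert B, auto)
  have "adj B = adj (adj P) * adj T * adj P" unfolding BT
    using P T aP by (simp add: adj_mult[of _ m m _ m] assoc_mult_mat[of _ m m _ m _ m])
  hence "P * T * adj P = P * adj T * adj P" unfolding adjB using BT by simp
  hence "adj P * (P * T * adj P) * P = adj P * (P * adj T * adj P) * P" by simp
  moreover have "adj P * (P * X * adj P) * P = X" if X: "X \<in> carrier_mat m m" for X
  proof -
    have "unitary (adj P) m" using aP unitary_right[OF uP] unfolding unitary_def by simp
    from unitary_conj[OF this X] show ?thesis by simp
  qed
  ultimately have Tadj: "T = adj T" using T by simp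
  have Tsym: "i < m \<Longrightarrow> j < m \<Longrightarrow> T $$ (i,j) = cnj (T $$ (j,i))" for i j
    using arg_cong[OF Tadj, of "\<lambda>X. X $$ (i,j)"] T by simp
  have Tdiag: "i < m \<Longrightarrow> j < m \<Longrightarrow> i \<noteq> j \<Longrightarrow> T $$ (i,j) = 0" for i j
  proof -
    assume i: "i < m" and j: "j < m" and ij: "i \<noteq> j"
    show ?thesis
    proof (cases "j < i")
      case True thus ?thesis using ut i T by auto
    next
      case False
      hence "i < j" using ij by auto
      hence "T $$ (j,i) = 0" using ut j T by auto
      thus ?thesis using Tsym[OF i j] by simp
    qed
  qed
  define lam where "lam l = Re (T $$ (l,l))" for l
  have Treal: "i < m \<Longrightarrow> T $$ (i,i) = complex_of_real (lam i)" for i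
    using Tsym[of i i] unfolding lam_def by (simp add: complex_eq_iff)
  have PT: "(P * T) $$ (i,l) = P $$ (i,l) * complex_of_real (lam l)" if i: "i < m" and l: "l < m" for i l
  proof -
    have "(P * T) $$ (i,l) = (\<Sum>k<m. P $$ (i,k) * T $$ (k,l))"
      using P T i l by (simp add: scalar_prod_def lessThan_atLeast0)
    also have "\<dots> = (\<Sum>k<m. if k = l then P $$ (i,l) * complex_of_real (lam l) else 0)"
      by (rule sum.cong, insert Tdiag l Treal, auto)
    also have "\<dots> = P $$ (i,l) * complex_of_real (lam l)" using l by simp
    finally show ?thesis .
  qed
  have entries: "\<forall>i<m. \<forall>j<m. B $$ (i,j) = (\<Sum>l<m. P $$ (i,l) * complex_of_real (lam l) * cnj (P $$ (j,l)))"
  proof (intro allI impI)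
    fix i j assume i: "i < m" and j: "j < m"
    have "B $$ (i,j) = (\<Sum>l<m. (P * T) $$ (i,l) * adj P $$ (l,j))"
      unfolding BT using P T i j by (simp add: scalar_prod_def lessThan_atLeast0)
    also have "\<dots> = (\<Sum>l<m. P $$ (i,l) * complex_of_real (lam l) * cnj (P $$ (j,l)))"
      by (rule sum.cong, insert PT i j P, auto)
    finally show "B $$ (i,j) = (\<Sum>l<m. P $$ (i,l) * complex_of_real (lam l) * cnj (P $$ (j,l)))" .
  qed
  have sim: "similar_mat B T"
    unfolding similar_mat_def
    using similar_mat_witI[OF unitary_right[OF uP] PP BT B T P aP] by blast
  have "char_poly B = char_poly T" by (rule char_poly_similar[OF sim])
  also have "\<dots> = (\<Prod> a \<leftarrow> diag_mat T. [:- a, 1:])" by (rule char_poly_upper_triangular[OF T ut])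
  finally have "eigenvalues_mset B = mset (diag_mat T)"
    unfolding eigenvalues_mset_def by (simp add: proots_linear_prod)
  hence "image_mset Re (eigenvalues_mset B) = mset (map lam [0..<m])"
    using T unfolding diag_mat_def lam_def by (simp add: multiset.map_comp o_def)
  with uP entries show ?thesis by blast
qed

lemma unitary_entries:
  assumes u: "unitary U m" and i: "i < m" and j: "j < m"
  shows "(\<Sum>a<m. cnj (U $$ (a,i)) * U $$ (a,j)) = (if i = j then 1 else 0)"
    "(\<Sum>l<m. U $$ (i,l) * cnj (U $$ (j,l))) = (if i = j then 1 else 0)"
proof -
  have U: "U \<in> carrier_mat m m" using u unfolding unitary_def by auto
  have "(adj U * U) $$ (i,j) = (\<Sum>a<m. cnj (U $$ (a,i)) * U $$ (a,j))"
    using U i j by (simp add: scalar_prod_def lessThan_atLeast0)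
  thus "(\<Sum>a<m. cnj (U $$ (a,i)) * U $$ (a,j)) = (if i = j then 1 else 0)"
    using u i j unfolding unitary_def by simp
  have "(U * adj U) $$ (i,j) = (\<Sum>l<m. U $$ (i,l) * cnj (U $$ (j,l)))"
    using U i j by (simp add: scalar_prod_def lessThan_atLeast0)
  thus "(\<Sum>l<m. U $$ (i,l) * cnj (U $$ (j,l))) = (if i = j then 1 else 0)"
    using unitary_right[OF u] i j by simp
qed

definition frame :: "complex mat \<Rightarrow> nat set \<Rightarrow> (nat \<Rightarrow> nat \<Rightarrow> complex) \<Rightarrow> (nat \<Rightarrow> real) \<Rightarrow> bool" where
  "frame A I u lam \<longleftrightarrow>
   (\<forall>p\<in>I. \<forall>q\<in>I. A $$ (p,q) = (\<Sum>i<card I. u p i * complex_of_real (lam i) * cnj (u q i))) \<and>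
   (\<forall>i<card I. \<forall>j<card I. (\<Sum>p\<in>I. cnj (u p i) * u p j) = (if i = j then 1 else 0)) \<and>
   (\<forall>p\<in>I. \<forall>q\<in>I. (\<Sum>i<card I. u p i * cnj (u q i)) = (if p = q then 1 else 0)) \<and>
   image_mset Re (eigenvalues_mset (submatrix A I I)) = mset (map lam [0..<card I])"

lemma frame_exists:
  assumes herm: "hermitian_mat A n" and I: "I \<subseteq> {..<n}"
  shows "\<exists>u lam. frame A I u lam"
proof -
  define m where "m = card I"
  have A: "A \<in> carrier_mat n n" using herm unfolding hermitian_mat_def by blast
  have fin: "finite I" using I finite_subset by blast
  have setI: "{i. i < dim_row A \<and> i \<in> I} = I" using I A by auto
  define S where "S = submatrix A I I"
  have setI2: "{i. i < dim_col A \<and> i \<in> I} = I" using I A by auto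
  have dS: "dim_row S = m" "dim_col S = m" unfolding S_def m_def dim_submatrix(1) dim_submatrix(2) setI setI2 by (rule refl)+
  have S: "S \<in> carrier_mat m m" using dS by (rule carrier_matI)
  have pickI: "a < m \<Longrightarrow> pick I a \<in> I" for a unfolding m_def by (rule pick_in_set_le)
  have Sidx: "a < m \<Longrightarrow> b < m \<Longrightarrow> S $$ (a,b) = A $$ (pick I a, pick I b)" for a b
    unfolding S_def using setI A by (intro submatrix_index, auto simp: m_def)
  have Sherm: "\<forall>a<m. \<forall>b<m. S $$ (a,b) = cnj (S $$ (b,a))"
  proof (intro allI impI)
    fix a b assume a: "a < m" and b: "b < m"
    have "pick I a < n" "pick I b < n" using pickI[OF a] pickI[OF b] I by auto
    moreover have "\<forall>i<n. \<forall>j<n. A $$ (i, j) = cnj (A $$ (j, i))" using herm unfolding hermitian_mat_def by blast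
    ultimately show "S $$ (a,b) = cnj (S $$ (b,a))" unfolding Sidx[OF a b] Sidx[OF b a] by blast
  qed
  from hermitian_frame[OF S Sherm] obtain U lam where uU: "unitary U m"
    and ent: "\<forall>i<m. \<forall>j<m. S $$ (i,j) = (\<Sum>l<m. U $$ (i,l) * complex_of_real (lam l) * cnj (U $$ (j,l)))"
    and ev: "image_mset Re (eigenvalues_mset S) = mset (map lam [0..<m])" by blast
  define pos where "pos p = card {a\<in>I. a < p}" for p
  have pos_lt: "p \<in> I \<Longrightarrow> pos p < m" for p
  proof -
    assume p: "p \<in> I"
    have "{a\<in>I. a < p} \<subset> I" using p by auto
    thus "pos p < m" unfolding pos_def m_def using fin by (simp add: psubset_card_mono)
  qed
  have pick_pos: "p \<in> I \<Longrightarrow> pick I (pos p) = p" for p unfolding pos_def by (rule pick_card_in_set)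
  have pos_pick: "a < m \<Longrightarrow> pos (pick I a) = a" for a unfolding pos_def m_def by (rule card_pick_le)
  have bij: "bij_betw (pick I) {..<m} I"
    by (rule bij_betw_byWitness[of _ pos], insert pickI pick_pos pos_pick pos_lt, auto)
  have reidx: "(\<Sum>p\<in>I. f p) = (\<Sum>a<m. f (pick I a))" for f :: "nat \<Rightarrow> complex"
    using sum.reindex_bij_betw[OF bij, of f] by simp
  define u where "u p i = U $$ (pos p, i)" for p i
  have "frame A I u lam" unfolding frame_def m_def[symmetric]
  proof (intro conjI ballI allI impI)
    fix p q assume p: "p \<in> I" and q: "q \<in> I"
    have "A $$ (p,q) = S $$ (pos p, pos q)" using Sidx[OF pos_lt[OF p] pos_lt[OF q]] pick_pos p q by simp
    thus "A $$ (p,q) = (\<Sum>i<m. u p i * complex_of_real (lam i) * cnj (u q i))"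
      using ent pos_lt[OF p] pos_lt[OF q] unfolding u_def by simp
    show "(\<Sum>i<m. u p i * cnj (u q i)) = (if p = q then 1 else 0)"
      unfolding u_def using unitary_entries(2)[OF uU pos_lt[OF p] pos_lt[OF q]] pick_pos p q by metis
  next
    fix i j assume i: "i < m" and j: "j < m"
    show "(\<Sum>p\<in>I. cnj (u p i) * u p j) = (if i = j then 1 else 0)"
      unfolding reidx u_def using unitary_entries(1)[OF uU i j] pos_pick by simp
  next
    show "image_mset Re (eigenvalues_mset (submatrix A I I)) = mset (map lam [0..<m])"
      using ev unfolding S_def .
  qed
  thus ?thesis by blast
qed



lemma G1:
  fixes y :: "nat \<Rightarrow> complex" and x :: "nat \<Rightarrow> nat \<Rightarrow> complex" and c :: "nat \<Rightarrow> complex"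
  shows "(\<Sum>p\<in>J. \<Sum>q\<in>J. cnj (y p) * (\<Sum>i<m. x p i * c i * cnj (x q i)) * y q)
    = (\<Sum>i<m. c i * ((\<Sum>p\<in>J. cnj (y p) * x p i) * cnj (\<Sum>p\<in>J. cnj (y p) * x p i)))"
proof -
  have "(\<Sum>p\<in>J. \<Sum>q\<in>J. cnj (y p) * (\<Sum>i<m. x p i * c i * cnj (x q i)) * y q)
     = (\<Sum>p\<in>J. \<Sum>q\<in>J. \<Sum>i<m. c i * (cnj (y p) * x p i) * (y q * cnj (x q i)))"
    by (simp add: sum_distrib_left sum_distrib_right mult_ac)
  also have "\<dots> = (\<Sum>p\<in>J. \<Sum>i<m. \<Sum>q\<in>J. c i * (cnj (y p) * x p i) * (y q * cnj (x q i)))"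
    by (rule sum.cong[OF refl], rule sum.swap)
  also have "\<dots> = (\<Sum>i<m. \<Sum>p\<in>J. \<Sum>q\<in>J. c i * (cnj (y p) * x p i) * (y q * cnj (x q i)))"
    by (rule sum.swap)
  also have "\<dots> = (\<Sum>i<m. c i * ((\<Sum>p\<in>J. cnj (y p) * x p i) * cnj (\<Sum>p\<in>J. cnj (y p) * x p i)))"
    by (simp add: cnj_sum sum_distrib_left sum_distrib_right mult_ac)
  finally show ?thesis .
qed

lemma sum_delta_J:
  fixes f :: "nat \<Rightarrow> complex"
  assumes "finite J"
  shows "(\<Sum>p\<in>J. \<Sum>q\<in>J. cnj (f p) * (if p = q then 1 else 0) * g q) = (\<Sum>p\<in>J. cnj (f p) * g p)"
proof (rule sum.cong[OF refl])
  fix p assume p: "p \<in> J"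
  have "(\<Sum>q\<in>J. cnj (f p) * (if p = q then 1 else 0) * g q) = (\<Sum>q\<in>J. if q = p then cnj (f p) * g p else 0)"
    by (rule sum.cong, auto)
  also have "\<dots> = cnj (f p) * g p" using p assms by simp
  finally show "(\<Sum>q\<in>J. cnj (f p) * (if p = q then 1 else 0) * g q) = cnj (f p) * g p" .
qed

lemma zz: "z * cnj z = complex_of_real ((cmod z)\<^sup>2)"
  using complex_norm_square[of z] by simp

lemma weights:
  assumes fI: "frame A I u lam" and fJ: "frame A J v mu" and JI: "J \<subseteq> I" and finI: "finite I"
  shows "l < card J \<Longrightarrow> mu l = (\<Sum>i<card I. lam i * (cmod (\<Sum>p\<in>J. cnj (v p l) * u p i))\<^sup>2)"
    and "l < card J \<Longrightarrow> (\<Sum>i<card I. (cmod (\<Sum>p\<in>J. cnj (v p l) * u p i))\<^sup>2) = 1"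
    and "(\<Sum>l<card J. (cmod (\<Sum>p\<in>J. cnj (v p l) * u p i))\<^sup>2) = (\<Sum>p\<in>J. (cmod (u p i))\<^sup>2)"
proof -
  have finJ: "finite J" using JI finI finite_subset by blast
  note fI' = fI[unfolded frame_def] and fJ' = fJ[unfolded frame_def]
  define m where "m = card I"
  define k where "k = card J"
  {
    assume l: "l < card J"
    define Q where "Q = (\<Sum>p\<in>J. \<Sum>q\<in>J. cnj (v p l) * A $$ (p,q) * v q l)"
    have "Q = (\<Sum>p\<in>J. \<Sum>q\<in>J. cnj (v p l) * (\<Sum>j<card J. v p j * complex_of_real (mu j) * cnj (v q j)) * v q l)"
      unfolding Q_def using fJ' by (intro sum.cong refl) auto
    also have "\<dots> = (\<Sum>j<card J. complex_of_real (mu j) * ((\<Sum>p\<in>J. cnj (v p l) * v p j) * cnj (\<Sum>p\<in>J. cnj (v p l) * v p j)))"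
      by (rule G1)
    also have "\<dots> = (\<Sum>j<card J. if j = l then complex_of_real (mu l) else 0)"
      by (rule sum.cong[OF refl], insert fJ' l, auto)
    also have "\<dots> = complex_of_real (mu l)" using l by simp
    finally have Q1: "Q = complex_of_real (mu l)" .
    have "Q = (\<Sum>p\<in>J. \<Sum>q\<in>J. cnj (v p l) * (\<Sum>i<card I. u p i * complex_of_real (lam i) * cnj (u q i)) * v q l)"
    proof -
      have Aeq: "\<And>p q. p \<in> J \<Longrightarrow> q \<in> J \<Longrightarrow> A $$ (p,q) = (\<Sum>i<card I. u p i * complex_of_real (lam i) * cnj (u q i))"
        using fI' JI by blast
      show ?thesis unfolding Q_def by (intro sum.cong refl) (simp add: Aeq)
    qed
    also have "\<dots> = (\<Sum>i<card I. complex_of_real (lam i) * ((\<Sum>p\<in>J. cnj (v p l) * u p i) * cnj (\<Sum>p\<in>J. cnj (v p l) * u p i)))"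
      by (rule G1)
    also have "\<dots> = complex_of_real (\<Sum>i<card I. lam i * (cmod (\<Sum>p\<in>J. cnj (v p l) * u p i))\<^sup>2)"
      unfolding zz by simp
    finally show "mu l = (\<Sum>i<card I. lam i * (cmod (\<Sum>p\<in>J. cnj (v p l) * u p i))\<^sup>2)"
      using Q1 of_real_eq_iff by metis
    have "(\<Sum>p\<in>J. \<Sum>q\<in>J. cnj (v p l) * (\<Sum>i<card I. u p i * 1 * cnj (u q i)) * v q l)
      = (\<Sum>i<card I. 1 * ((\<Sum>p\<in>J. cnj (v p l) * u p i) * cnj (\<Sum>p\<in>J. cnj (v p l) * u p i)))"
      by (rule G1)
    also have "(\<Sum>p\<in>J. \<Sum>q\<in>J. cnj (v p l) * (\<Sum>i<card I. u p i * 1 * cnj (u q i)) * v q l)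
      = (\<Sum>p\<in>J. \<Sum>q\<in>J. cnj (v p l) * (if p = q then 1 else 0) * v q l)"
    proof -
      have Ueq: "\<And>p q. p \<in> J \<Longrightarrow> q \<in> J \<Longrightarrow> (\<Sum>i<card I. u p i * cnj (u q i)) = (if p = q then 1 else 0)"
      proof -
        fix p q assume "p \<in> J" "q \<in> J"
        hence "p \<in> I" "q \<in> I" using JI by auto
        thus "(\<Sum>i<card I. u p i * cnj (u q i)) = (if p = q then 1 else 0)" using fI' by simp
      qed
      show ?thesis by (intro sum.cong refl) (simp add: Ueq)
    qed
    also have "\<dots> = (\<Sum>p\<in>J. cnj (v p l) * v p l)" by (rule sum_delta_J[OF finJ])
    also have "\<dots> = 1" using fJ' l by auto
    finally have "(\<Sum>i<card I. complex_of_real ((cmod (\<Sum>p\<in>J. cnj (v p l) * u p i))\<^sup>2)) = 1"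
      by (simp only: mult_1 zz)
    hence "complex_of_real (\<Sum>i<card I. (cmod (\<Sum>p\<in>J. cnj (v p l) * u p i))\<^sup>2) = 1"
      by (simp only: of_real_sum)
    thus "(\<Sum>i<card I. (cmod (\<Sum>p\<in>J. cnj (v p l) * u p i))\<^sup>2) = 1"
      by (simp only: of_real_eq_1_iff)
  }
  have "(\<Sum>p\<in>J. \<Sum>q\<in>J. cnj (u p i) * (\<Sum>l<card J. v p l * 1 * cnj (v q l)) * u q i)
    = (\<Sum>l<card J. 1 * ((\<Sum>p\<in>J. cnj (u p i) * v p l) * cnj (\<Sum>p\<in>J. cnj (u p i) * v p l)))"
    by (rule G1)
  also have "(\<Sum>p\<in>J. \<Sum>q\<in>J. cnj (u p i) * (\<Sum>l<card J. v p l * 1 * cnj (v q l)) * u q i)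
      = (\<Sum>p\<in>J. \<Sum>q\<in>J. cnj (u p i) * (if p = q then 1 else 0) * u q i)"
    using fJ' by (intro sum.cong refl) auto
  also have "\<dots> = (\<Sum>p\<in>J. cnj (u p i) * u p i)" by (rule sum_delta_J[OF finJ])
  finally have E: "(\<Sum>p\<in>J. cnj (u p i) * u p i) = (\<Sum>l<card J. 1 * ((\<Sum>p\<in>J. cnj (u p i) * v p l) * cnj (\<Sum>p\<in>J. cnj (u p i) * v p l)))" .
  have E1: "(\<Sum>p\<in>J. cnj (u p i) * u p i) = (\<Sum>p\<in>J. complex_of_real ((cmod (u p i))\<^sup>2))"
    by (rule sum.cong[OF refl]) (metis zz mult.commute)
  have E2: "(\<Sum>l<card J. 1 * ((\<Sum>p\<in>J. cnj (u p i) * v p l) * cnj (\<Sum>p\<in>J. cnj (u p i) * v p l)))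
     = (\<Sum>l<card J. complex_of_real ((cmod (\<Sum>p\<in>J. cnj (u p i) * v p l))\<^sup>2))"
    by (rule sum.cong[OF refl]) (simp only: mult_1 zz)
  have H: "(\<Sum>p\<in>J. complex_of_real ((cmod (u p i))\<^sup>2)) = (\<Sum>l<card J. complex_of_real ((cmod (\<Sum>p\<in>J. cnj (u p i) * v p l))\<^sup>2))"
    using E E1 E2 by simp
  have "cmod (\<Sum>p\<in>J. cnj (u p i) * v p l) = cmod (\<Sum>p\<in>J. cnj (v p l) * u p i)" for l
  proof -
    have "(\<Sum>p\<in>J. cnj (u p i) * v p l) = cnj (\<Sum>p\<in>J. cnj (v p l) * u p i)"
      by (simp add: cnj_sum mult.commute)
    thus ?thesis by (simp only: complex_mod_cnj)
  qed
  note M = this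
  have "complex_of_real (\<Sum>p\<in>J. (cmod (u p i))\<^sup>2) = complex_of_real (\<Sum>l<card J. (cmod (\<Sum>p\<in>J. cnj (v p l) * u p i))\<^sup>2)"
    unfolding of_real_sum H M ..
  thus "(\<Sum>l<card J. (cmod (\<Sum>p\<in>J. cnj (v p l) * u p i))\<^sup>2) = (\<Sum>p\<in>J. (cmod (u p i))\<^sup>2)"
    by (simp only: of_real_eq_iff)
qed

lemma card_supsets:
  assumes N: "finite N" and JN: "J \<subseteq> N" and Jm: "card J \<le> m"
  shows "card {I. J \<subseteq> I \<and> I \<subseteq> N \<and> card I = m} = (card N - card J) choose (m - card J)"
proof -
  have finJ: "finite J" using JN N finite_subset by blast
  have "bij_betw (\<lambda>I. I - J) {I. J \<subseteq> I \<and> I \<subseteq> N \<and> card I = m} {K. K \<subseteq> N - J \<and> card K = m - card J}"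
  proof (rule bij_betw_byWitness[of _ "\<lambda>K. K \<union> J"])
    show "\<forall>I\<in>{I. J \<subseteq> I \<and> I \<subseteq> N \<and> card I = m}. I - J \<union> J = I" by auto
    show "\<forall>K\<in>{K. K \<subseteq> N - J \<and> card K = m - card J}. K \<union> J - J = K" by auto
    show "(\<lambda>I. I - J) ` {I. J \<subseteq> I \<and> I \<subseteq> N \<and> card I = m} \<subseteq> {K. K \<subseteq> N - J \<and> card K = m - card J}"
    proof
      fix K assume "K \<in> (\<lambda>I. I - J) ` {I. J \<subseteq> I \<and> I \<subseteq> N \<and> card I = m}"
      then obtain I where I: "J \<subseteq> I" "I \<subseteq> N" "card I = m" and K: "K = I - J" by auto
      have "card K = m - card J" unfolding K using card_Diff_subset[OF finJ I(1)] I(3) by simp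
      thus "K \<in> {K. K \<subseteq> N - J \<and> card K = m - card J}" using K I by auto
    qed
    show "(\<lambda>K. K \<union> J) ` {K. K \<subseteq> N - J \<and> card K = m - card J} \<subseteq> {I. J \<subseteq> I \<and> I \<subseteq> N \<and> card I = m}"
    proof
      fix I assume "I \<in> (\<lambda>K. K \<union> J) ` {K. K \<subseteq> N - J \<and> card K = m - card J}"
      then obtain K where K: "K \<subseteq> N - J" "card K = m - card J" and I: "I = K \<union> J" by auto
      have finK: "finite K" using K(1) N finite_subset by blast
      have "card I = card K + card J" unfolding I using K(1) finK finJ by (subst card_Un_disjoint, auto)
      thus "I \<in> {I. J \<subseteq> I \<and> I \<subseteq> N \<and> card I = m}" using K I JN Jm by auto
    qed
  qed
  hence "card {I. J \<subseteq> I \<and> I \<subseteq> N \<and> card I = m} = card {K. K \<subseteq> N - J \<and> card K = m - card J}"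
    by (rule bij_betw_same_card)
  also have "\<dots> = card (N - J) choose (m - card J)" by (rule n_subsets, insert N, auto)
  also have "card (N - J) = card N - card J" by (rule card_Diff_subset[OF finJ JN])
  finally show ?thesis .
qed

lemma double_count:
  fixes h :: "'b \<Rightarrow> real"
  assumes "finite A" "finite B"
  shows "(\<Sum>a\<in>A. \<Sum>b\<in>{b\<in>B. R a b}. h b) = (\<Sum>b\<in>B. real (card {a\<in>A. R a b}) * h b)"
  unfolding sum.swap_restrict[OF assms] by simp

lemma subsets_finite: "finite N \<Longrightarrow> finite {J. J \<subseteq> N \<and> card J = k}"
  by (rule finite_subset[of _ "Pow N"], auto)

lemma count_points:
  fixes g :: "nat \<Rightarrow> real"
  assumes I: "finite I" and k: "1 \<le> k" "k \<le> card I"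
  shows "(\<Sum>J\<in>{J. J \<subseteq> I \<and> card J = k}. \<Sum>p\<in>J. g p) = real ((card I - 1) choose (k - 1)) * (\<Sum>p\<in>I. g p)"
proof -
  have "(\<Sum>J\<in>{J. J \<subseteq> I \<and> card J = k}. \<Sum>p\<in>J. g p) = (\<Sum>J\<in>{J. J \<subseteq> I \<and> card J = k}. \<Sum>p\<in>{p\<in>I. p \<in> J}. g p)"
    by (rule sum.cong[OF refl], rule sum.cong, auto)
  also have "\<dots> = (\<Sum>p\<in>I. real (card {J\<in>{J. J \<subseteq> I \<and> card J = k}. p \<in> J}) * g p)"
    by (rule double_count[OF subsets_finite[OF I] I])
  also have "\<dots> = (\<Sum>p\<in>I. real ((card I - 1) choose (k - 1)) * g p)"
  proof (rule sum.cong[OF refl])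
    fix p assume p: "p \<in> I"
    have "{J\<in>{J. J \<subseteq> I \<and> card J = k}. p \<in> J} = {J. {p} \<subseteq> J \<and> J \<subseteq> I \<and> card J = k}" by auto
    hence "card {J\<in>{J. J \<subseteq> I \<and> card J = k}. p \<in> J} = (card I - 1) choose (k - 1)"
      using card_supsets[OF I, of "{p}" k] p k by simp
    thus "real (card {J\<in>{J. J \<subseteq> I \<and> card J = k}. p \<in> J}) * g p = real ((card I - 1) choose (k - 1)) * g p" by simp
  qed
  finally show ?thesis by (simp add: sum_distrib_left)
qed

lemma count_sets:
  fixes h :: "nat set \<Rightarrow> real"
  assumes N: "finite N" and k: "k \<le> m"
  shows "(\<Sum>I\<in>{I. I \<subseteq> N \<and> card I = m}. \<Sum>J\<in>{J. J \<subseteq> I \<and> card J = k}. h J)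
    = real ((card N - k) choose (m - k)) * (\<Sum>J\<in>{J. J \<subseteq> N \<and> card J = k}. h J)"
proof -
  have "(\<Sum>I\<in>{I. I \<subseteq> N \<and> card I = m}. \<Sum>J\<in>{J. J \<subseteq> I \<and> card J = k}. h J)
     = (\<Sum>I\<in>{I. I \<subseteq> N \<and> card I = m}. \<Sum>J\<in>{J\<in>{J. J \<subseteq> N \<and> card J = k}. J \<subseteq> I}. h J)"
    by (rule sum.cong[OF refl], rule sum.cong, auto)
  also have "\<dots> = (\<Sum>J\<in>{J. J \<subseteq> N \<and> card J = k}. real (card {I\<in>{I. I \<subseteq> N \<and> card I = m}. J \<subseteq> I}) * h J)"
    by (rule double_count[OF subsets_finite[OF N] subsets_finite[OF N]])
  also have "\<dots> = (\<Sum>J\<in>{J. J \<subseteq> N \<and> card J = k}. real ((card N - k) choose (m - k)) * h J)"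
  proof (rule sum.cong[OF refl])
    fix J assume J: "J \<in> {J. J \<subseteq> N \<and> card J = k}"
    have "{I\<in>{I. I \<subseteq> N \<and> card I = m}. J \<subseteq> I} = {I. J \<subseteq> I \<and> I \<subseteq> N \<and> card I = m}" by auto
    hence "card {I\<in>{I. I \<subseteq> N \<and> card I = m}. J \<subseteq> I} = (card N - k) choose (m - k)"
      using card_supsets[OF N, of J m] J k by simp
    thus "real (card {I\<in>{I. I \<subseteq> N \<and> card I = m}. J \<subseteq> I}) * h J = real ((card N - k) choose (m - k)) * h J" by simp
  qed
  finally show ?thesis by (simp add: sum_distrib_left)
qed

definition jensen :: "(real \<Rightarrow> real) \<Rightarrow> bool" where
  "jensen f \<longleftrightarrow> (\<forall>N (w :: nat \<Rightarrow> real) x. (\<forall>i<N. 0 \<le> w i) \<longrightarrow> (\<Sum>i<N. w i) = 1 \<longrightarrow>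
      f (\<Sum>i<N. w i * x i) \<le> (\<Sum>i<N. w i * f (x i)))"

lemma frame_col_norm:
  assumes fI: "frame A I u lam" and i: "i < card I"
  shows "(\<Sum>p\<in>I. (cmod (u p i))\<^sup>2) = 1"
proof -
  have "(\<Sum>p\<in>I. cnj (u p i) * u p i) = 1" using fI i unfolding frame_def by auto
  moreover have "(\<Sum>p\<in>I. cnj (u p i) * u p i) = (\<Sum>p\<in>I. complex_of_real ((cmod (u p i))\<^sup>2))"
    by (rule sum.cong[OF refl]) (metis zz mult.commute)
  ultimately have "complex_of_real (\<Sum>p\<in>I. (cmod (u p i))\<^sup>2) = 1" by (simp only: of_real_sum)
  thus ?thesis by (simp only: of_real_eq_1_iff)
qed

lemma core_frame:
  assumes fI: "frame A I u lam" and finI: "finite I" and k: "1 \<le> k" "k \<le> card I" and jf: "jensen f"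
    and fJ: "\<forall>J\<in>{J. J \<subseteq> I \<and> card J = k}. frame A J (vv J) (mm J)"
  shows "(\<Sum>J\<in>{J. J \<subseteq> I \<and> card J = k}. \<Sum>l<k. f (mm J l))
      \<le> real ((card I - 1) choose (k - 1)) * (\<Sum>i<card I. f (lam i))"
proof -
  define m where "m = card I"
  define W where "W J l i = (cmod (\<Sum>p\<in>J. cnj (vv J p l) * u p i))\<^sup>2" for J l i
  define S where "S = {J. J \<subseteq> I \<and> card J = k}"
  have one: "(\<Sum>l<k. f (mm J l)) \<le> (\<Sum>i<m. f (lam i) * (\<Sum>p\<in>J. (cmod (u p i))\<^sup>2))" if J: "J \<in> S" for J
  proof -
    have fJJ: "frame A J (vv J) (mm J)" and JI: "J \<subseteq> I" and cJ: "card J = k" using fJ J unfolding S_def by auto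
    note wt = weights[OF fI fJJ JI finI]
    have "(\<Sum>l<k. f (mm J l)) \<le> (\<Sum>l<k. \<Sum>i<m. W J l i * f (lam i))"
    proof (rule sum_mono)
      fix l assume "l \<in> {..<k}"
      hence l: "l < card J" using cJ by simp
      have "mm J l = (\<Sum>i<m. W J l i * lam i)" unfolding wt(1)[OF l] W_def m_def by (simp add: mult.commute)
      moreover have "(\<Sum>i<m. W J l i) = 1" unfolding W_def m_def by (rule wt(2)[OF l])
      moreover have "\<forall>i<m. 0 \<le> W J l i" unfolding W_def by simp
      ultimately show "f (mm J l) \<le> (\<Sum>i<m. W J l i * f (lam i))"
        using jf unfolding jensen_def by simp
    qed
    also have "\<dots> = (\<Sum>i<m. f (lam i) * (\<Sum>l<k. W J l i))"
      by (subst sum.swap, simp add: sum_distrib_left mult.commute)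
    also have "\<dots> = (\<Sum>i<m. f (lam i) * (\<Sum>p\<in>J. (cmod (u p i))\<^sup>2))"
      unfolding W_def using wt(3) cJ by simp
    finally show ?thesis .
  qed
  have "(\<Sum>J\<in>S. \<Sum>l<k. f (mm J l)) \<le> (\<Sum>J\<in>S. \<Sum>i<m. f (lam i) * (\<Sum>p\<in>J. (cmod (u p i))\<^sup>2))"
    by (rule sum_mono, rule one)
  also have "\<dots> = (\<Sum>i<m. f (lam i) * (\<Sum>J\<in>S. \<Sum>p\<in>J. (cmod (u p i))\<^sup>2))"
    by (subst sum.swap, simp add: sum_distrib_left)
  also have "\<dots> = (\<Sum>i<m. f (lam i) * real ((card I - 1) choose (k - 1)))"
  proof (rule sum.cong[OF refl])
    fix i assume "i \<in> {..<m}"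
    hence i: "i < card I" unfolding m_def by simp
    show "f (lam i) * (\<Sum>J\<in>S. \<Sum>p\<in>J. (cmod (u p i))\<^sup>2) = f (lam i) * real ((card I - 1) choose (k - 1))"
      unfolding S_def count_points[OF finI k] frame_col_norm[OF fI i] by simp
  qed
  also have "\<dots> = real ((card I - 1) choose (k - 1)) * (\<Sum>i<m. f (lam i))"
    by (simp add: sum_distrib_right mult.commute)
  finally show ?thesis unfolding S_def m_def .
qed



definition Phi :: "(real \<Rightarrow> real) \<Rightarrow> real multiset \<Rightarrow> real" where
  "Phi f M = sum_mset (image_mset f M)"

lemma mset_desc: "mset (desc M) = M"
  unfolding desc_def by simp

lemma length_desc: "length (desc M) = size M"
  using mset_desc[of M] by (metis size_mset)

lemma Phi_desc: "Phi f M = sum_list (map f (desc M))"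
proof -
  have "Phi f M = sum_mset (image_mset f (mset (desc M)))" unfolding Phi_def mset_desc ..
  also have "\<dots> = sum_list (map f (desc M))" by (simp only: mset_map[symmetric] sum_mset_sum_list)
  finally show ?thesis .
qed

lemma sorted_desc: "sorted_wrt (\<ge>) (desc M)"
  unfolding desc_def sorted_wrt_rev using sorted_sorted_list_of_multiset[of M] by simp

lemma take_le_bound:
  fixes L :: "real list"
  assumes "k \<le> length L"
  shows "sum_list (take k L) \<le> real k * s + sum_list (map (\<lambda>t. max 0 (t - s)) L)"
  using assms
proof (induct L arbitrary: k)
  case Nil thus ?case by simp
next
  case (Cons a L k)
  show ?case
  proof (cases k)
    case 0
    have "0 \<le> sum_list (map (\<lambda>t. max 0 (t - s)) (a # L))" by (rule sum_list_nonneg, auto)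
    thus ?thesis using 0 by simp
  next
    case (Suc k')
    with Cons have "sum_list (take k' L) \<le> real k' * s + sum_list (map (\<lambda>t. max 0 (t - s)) L)" by simp
    moreover have "a \<le> s + max 0 (a - s)" by simp
    ultimately show ?thesis using Suc by (simp add: algebra_simps)
  qed
qed

lemma take_eq_bound:
  fixes L :: "real list"
  assumes sorted: "sorted_wrt (\<ge>) L" and k: "1 \<le> k" "k \<le> length L"
  defines "s \<equiv> L ! (k - 1)"
  shows "sum_list (take k L) = real k * s + sum_list (map (\<lambda>t. max 0 (t - s)) L)"
proof -
  have up: "t \<ge> s" if t: "t \<in> set (take k L)" for t
  proof -
    from t obtain i where i: "i < length (take k L)" and ti: "t = take k L ! i" by (metis in_set_conv_nth)
    have ik: "i < k" and iL: "i < length L" using i by auto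
    have "t = L ! i" using ti ik by simp
    moreover have "L ! i \<ge> L ! (k - 1)"
    proof (cases "i = k - 1")
      case False
      hence "i < k - 1" using ik by simp
      thus ?thesis using sorted_wrt_nth_less[OF sorted, of i "k - 1"] k by simp
    qed simp
    ultimately show ?thesis unfolding s_def by simp
  qed
  have down: "t \<le> s" if t: "t \<in> set (drop k L)" for t
  proof -
    from t obtain j where j: "j < length (drop k L)" and tj: "t = drop k L ! j" by (metis in_set_conv_nth)
    have "t = L ! (k + j)" using tj j k by simp
    moreover have "L ! (k - 1) \<ge> L ! (k + j)"
      using sorted_wrt_nth_less[OF sorted, of "k - 1" "k + j"] k j by simp
    ultimately show ?thesis unfolding s_def by simp
  qed
  have "sum_list (map (\<lambda>t. max 0 (t - s)) L)
      = sum_list (map (\<lambda>t. max 0 (t - s)) (take k L)) + sum_list (map (\<lambda>t. max 0 (t - s)) (drop k L))"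
    by (metis append_take_drop_id map_append sum_list_append)
  also have "map (\<lambda>t. max 0 (t - s)) (take k L) = map (\<lambda>t. t - s) (take k L)"
    by (rule map_cong[OF refl], insert up, auto)
  also have "map (\<lambda>t. max 0 (t - s)) (drop k L) = map (\<lambda>t. 0) (drop k L)"
    by (rule map_cong[OF refl], insert down, auto)
  also have "sum_list (map (\<lambda>t. t - s) (take k L)) = sum_list (take k L) - real k * s"
    using k by (simp add: sum_list_subtractf sum_list_triv)
  finally show ?thesis by simp
qed

lemma major_crit:
  fixes x y :: "real multiset"
  assumes sz: "size x = size y" and sm: "sum_mset x = sum_mset y"
    and pos: "\<And>s. Phi (\<lambda>t. max 0 (t - s)) y \<le> Phi (\<lambda>t. max 0 (t - s)) x"
  shows "majorizes x y"
  unfolding majorizes_def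
proof (intro conjI ballI)
  show "size x = size y" by fact
  fix k assume "k \<in> {1..size x}"
  hence k: "1 \<le> k" "k \<le> size x" by auto
  define s where "s = desc x ! (k - 1)"
  have "sum_list (take k (desc y)) \<le> real k * s + Phi (\<lambda>t. max 0 (t - s)) y"
    unfolding Phi_desc by (rule take_le_bound, insert k sz, simp add: length_desc)
  also have "\<dots> \<le> real k * s + Phi (\<lambda>t. max 0 (t - s)) x" using pos by simp
  also have "\<dots> = sum_list (take k (desc x))"
    unfolding Phi_desc s_def by (rule take_eq_bound[symmetric, OF sorted_desc], insert k, auto simp: length_desc)
  finally show "sum_list (take k (desc y)) \<le> sum_list (take k (desc x))" .
next
  have "sum_list (take (size x) (desc x)) = sum_list (desc x)" by (simp add: length_desc)
  also have "\<dots> = sum_mset x" using Phi_desc[of "\<lambda>t. t" x] unfolding Phi_def by simp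
  also have "\<dots> = sum_mset y" by fact
  also have "\<dots> = sum_list (desc y)" using Phi_desc[of "\<lambda>t. t" y] unfolding Phi_def by simp
  also have "\<dots> = sum_list (take (size x) (desc y))" using sz by (simp add: length_desc)
  finally show "sum_list (take (size x) (desc x)) = sum_list (take (size x) (desc y))" .
qed



lemma Phi_repeat: "Phi f (repeat_mset c M) = real c * Phi f M"
proof (induct c)
  case 0 thus ?case by (simp add: Phi_def)
next
  case (Suc c)
  have "Phi f (repeat_mset (Suc c) M) = Phi f M + Phi f (repeat_mset c M)" by (simp add: Phi_def)
  thus ?case using Suc by (simp add: algebra_simps)
qed

lemma Phi_sum: "Phi f (\<Sum>I\<in>S. M I) = (\<Sum>I\<in>S. Phi f (M I))"
proof (cases "finite S")
  case True thus ?thesis by (induct S rule: finite_induct) (auto simp: Phi_def)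
next
  case False thus ?thesis by (simp add: Phi_def)
qed

lemma Phi_frame: assumes "frame A I u lam"
  shows "Phi f (image_mset Re (eigenvalues_mset (submatrix A I I))) = (\<Sum>i<card I. f (lam i))"
proof -
  have "image_mset Re (eigenvalues_mset (submatrix A I I)) = mset (map lam [0..<card I])"
    using assms unfolding frame_def by blast
  hence "Phi f (image_mset Re (eigenvalues_mset (submatrix A I I))) = sum_list (map f (map lam [0..<card I]))"
    unfolding Phi_def by (simp only: mset_map[symmetric] sum_mset_sum_list)
  also have "\<dots> = (\<Sum>i<card I. f (lam i))" by (simp add: sum_list_distinct_conv_sum_set atLeast0LessThan)
  finally show ?thesis .
qed

lemma Phi_affine: "Phi (\<lambda>t. a * t + b) M = a * sum_mset M + b * real (size M)"
  by (induct M) (auto simp: Phi_def algebra_simps)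

lemma jensen_affine: "jensen (\<lambda>t. a * t + b)"
  unfolding jensen_def
proof (intro allI impI)
  fix N and w :: "nat \<Rightarrow> real" and x :: "nat \<Rightarrow> real"
  assume "\<forall>i<N. 0 \<le> w i" and w1: "(\<Sum>i<N. w i) = 1"
  have "(\<Sum>i<N. w i * (a * x i + b)) = a * (\<Sum>i<N. w i * x i) + b * (\<Sum>i<N. w i)"
    by (simp add: algebra_simps sum.distrib sum_distrib_left)
  thus "a * (\<Sum>i<N. w i * x i) + b \<le> (\<Sum>i<N. w i * (a * x i + b))" using w1 by simp
qed

lemma jensen_pos: "jensen (\<lambda>t. max 0 (t - s))"
  unfolding jensen_def
proof (intro allI impI)
  fix N and w :: "nat \<Rightarrow> real" and x :: "nat \<Rightarrow> real"
  assume w0: "\<forall>i<N. 0 \<le> w i" and w1: "(\<Sum>i<N. w i) = 1"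
  have "(\<Sum>i<N. w i * x i) - s = (\<Sum>i<N. w i * (x i - s))"
    using w1 by (simp add: algebra_simps sum_subtractf sum_distrib_left[symmetric])
  also have "\<dots> \<le> (\<Sum>i<N. w i * max 0 (x i - s))"
    by (rule sum_mono, insert w0, auto intro: mult_left_mono)
  finally have a: "(\<Sum>i<N. w i * x i) - s \<le> (\<Sum>i<N. w i * max 0 (x i - s))" .
  have b: "0 \<le> (\<Sum>i<N. w i * max 0 (x i - s))" by (rule sum_nonneg, insert w0, auto)
  show "max 0 ((\<Sum>i<N. w i * x i) - s) \<le> (\<Sum>i<N. w i * max 0 (x i - s))" using a b by simp
qed

definition FR :: "complex mat \<Rightarrow> nat set \<Rightarrow> (nat \<Rightarrow> nat \<Rightarrow> complex) \<times> (nat \<Rightarrow> real)" where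
  "FR A I = (SOME p. frame A I (fst p) (snd p))"

lemma FR_frame: assumes "hermitian_mat A n" "I \<subseteq> {..<n}"
  shows "frame A I (fst (FR A I)) (snd (FR A I))"
proof -
  from frame_exists[OF assms] obtain u lam where "frame A I u lam" by blast
  hence "\<exists>p. frame A I (fst p) (snd p)" by (intro exI[of _ "(u, lam)"]) simp
  thus ?thesis unfolding FR_def by (rule someI_ex)
qed

lemma main_ineq:
  assumes herm: "hermitian_mat A n" and k: "1 \<le> k" "k \<le> m" and mn: "m \<le> n" and jf: "jensen f"
  shows "Phi f (repeat_mset ((n - k) choose (m - k)) (X k A)) \<le> Phi f (repeat_mset ((m - 1) choose (k - 1)) (X m A))"
proof -
  have dA: "dim_row A = n" using herm unfolding hermitian_mat_def carrier_mat_def by blast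
  define N where "N = {..<n}"
  have finN: "finite N" and cN: "card N = n" unfolding N_def by auto
  define G where "G J = (\<Sum>l<card J. f (snd (FR A J) l))" for J
  have PX: "Phi f (X j A) = (\<Sum>I\<in>{I. I \<subseteq> N \<and> card I = j}. G I)" for j
    unfolding X_def dA N_def[symmetric] Phi_sum G_def
    by (rule sum.cong[OF refl], rule Phi_frame, rule FR_frame[OF herm], auto simp: N_def)
  have "Phi f (repeat_mset ((n - k) choose (m - k)) (X k A))
      = real ((card N - k) choose (m - k)) * (\<Sum>J\<in>{J. J \<subseteq> N \<and> card J = k}. G J)"
    unfolding Phi_repeat PX cN ..
  also have "\<dots> = (\<Sum>I\<in>{I. I \<subseteq> N \<and> card I = m}. \<Sum>J\<in>{J. J \<subseteq> I \<and> card J = k}. G J)"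
    by (rule count_sets[OF finN k(2), symmetric])
  also have "\<dots> \<le> (\<Sum>I\<in>{I. I \<subseteq> N \<and> card I = m}. real ((m - 1) choose (k - 1)) * G I)"
  proof (rule sum_mono)
    fix I assume I: "I \<in> {I. I \<subseteq> N \<and> card I = m}"
    have IN: "I \<subseteq> {..<n}" and cI: "card I = m" using I unfolding N_def by auto
    have finI: "finite I" using IN finite_subset by blast
    have "(\<Sum>J\<in>{J. J \<subseteq> I \<and> card J = k}. G J) = (\<Sum>J\<in>{J. J \<subseteq> I \<and> card J = k}. \<Sum>l<k. f (snd (FR A J) l))"
      unfolding G_def by (rule sum.cong, auto)
    also have "\<dots> \<le> real ((card I - 1) choose (k - 1)) * (\<Sum>i<card I. f (snd (FR A I) i))"
      by (rule core_frame[OF FR_frame[OF herm IN] finI k(1) _ jf], insert k cI IN, auto intro: FR_frame[OF herm])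
    finally show "(\<Sum>J\<in>{J. J \<subseteq> I \<and> card J = k}. G J) \<le> real ((m - 1) choose (k - 1)) * G I"
      unfolding G_def cI .
  qed
  also have "\<dots> = Phi f (repeat_mset ((m - 1) choose (k - 1)) (X m A))"
    unfolding Phi_repeat PX by (simp add: sum_distrib_left)
  finally show ?thesis .
qed

theorem theorem4p1:
  fixes A :: "complex mat" and n k m :: nat
  assumes "hermitian_mat A n"
    and "1 \<le> k" and "k \<le> m" and "m \<le> n"
  shows "majorizes (repeat_mset ((m - 1) choose (k - 1)) (X m A))
                   (repeat_mset ((n - k) choose (m - k)) (X k A))"
proof -
  define x where "x = repeat_mset ((m - 1) choose (k - 1)) (X m A)"
  define y where "y = repeat_mset ((n - k) choose (m - k)) (X k A)"
  have ineq: "jensen f \<Longrightarrow> Phi f y \<le> Phi f x" for f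
    unfolding x_def y_def by (rule main_ineq[OF assms])
  have aff: "a * sum_mset y + b * real (size y) \<le> a * sum_mset x + b * real (size x)" for a b
    using ineq[OF jensen_affine[of a b]] unfolding Phi_affine .
  have "real (size y) \<le> real (size x)" using aff[of 0 1] by simp
  moreover have "real (size x) \<le> real (size y)" using aff[of 0 "-1"] by simp
  ultimately have sz: "size x = size y" by simp
  have "sum_mset y \<le> sum_mset x" using aff[of 1 0] by simp
  moreover have "sum_mset x \<le> sum_mset y" using aff[of "-1" 0] by linarith
  ultimately have sm: "sum_mset x = sum_mset y" by simp
  have "majorizes x y"
    by (rule major_crit[OF sz sm], rule ineq, rule jensen_pos)
  thus ?thesis unfolding x_def y_def .
qed

end
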